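(* Let $\lambda_0>0$, let the loss $l(\theta;y)$ be two-times differentiable (w.r.t. $\theta$) and convex, and let $f(\gamma;y)=m(\gamma;y)-\gamma$ with $m(\gamma;y):=\arg\min_\theta\big(l(\theta;y)+\tfrac12(\gamma-\theta)\mathcal V^\star(\gamma-\theta)^\top\big)$. Suppose there exist $K\times K$ matrices $\mathcal C^\star$, $\mathcal B^\star$ and $\mathcal V^\star>\mathbf 0$ satisfying \begin{align*} \mathcal V^\star&=\lambda_0\mathcal I-\alpha\mathbb E[f'(\Gamma^\star;Y)]\mathcal V^\star,\\ \mathcal B^\star&=\tfrac{\alpha}{\lambda_0}\mathbb E[G_0^\top f(\Gamma^\star;Y)]\mathcal V^\star,\\ \mathcal C^\star&=\alpha\mathbb E[f(\Gamma^\star;Y)^\top f(\Gamma^\star;Y)], \end{align*} with $\Gamma^\star=G_0\mathcal B^\star+G\sqrt{\mathcal C^\star}$. Then $\rho_{\rm AT}:=\rho\big(\alpha\,\mathbb E[f'(\Gamma^\star;Y)\otimes f'(\Gamma^\star;Y)]\big)<1$.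
   Context: $\alpha>0$ fixed; $G\sim\mathcal N(\mathbf 0,\mathcal I)$ ($1\times K$) independent of $(Y,G_0)$, where $G_0\sim\mathcal N(\mathbf 0,\mathcal I)$ and $Y\mid G_0\sim p_0(Y\mid G_0\sqrt{\mathcal C_0})$ for a generating likelihood $p_0$ and fixed $\mathcal C_0\ge0$. $f'(\gamma;y)$ is the $K\times K$ Jacobian w.r.t. $\gamma$ ($[f']_{kk'}=\partial f_{k'}/\partial\gamma_k$), which equals $-l''(m(\gamma;y);y)(\mathcal V^\star+l''(m(\gamma;y);y))^{-1}$; $\rho(\cdot)$ is the spectral radius, $\otimes$ the Kronecker product. *)

theory Defs
  imports "HOL-Probability.Probability"
begin

text \<open>Row vectors of length K are modelled as real^'k (index type 'k finite, K = CARD('k)),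
  K x K matrices as real^'k^'k with A $ i $ j the (i,j) entry.  A row vector x times a
  matrix A is x v* A.\<close>

definition outer :: "real^'k \<Rightarrow> real^'k \<Rightarrow> real^'k^'k" where
  "outer x y = (\<chi> i j. x $ i * y $ j)"   \<comment> \<open>x^T y for row vectors x, y\<close>

definition kron :: "real^'k^'k \<Rightarrow> real^'k^'k \<Rightarrow> real^('k \<times> 'k)^('k \<times> 'k)" where
  "kron A B = (\<chi> p q. A $ fst p $ fst q * B $ snd p $ snd q)"

definition psd :: "real^'k^'k \<Rightarrow> bool" where
  "psd S \<longleftrightarrow> transpose S = S \<and> (\<forall>x. 0 \<le> x \<bullet> (S *v x))"

definition pos_def :: "real^'k^'k \<Rightarrow> bool" where
  "pos_def S \<longleftrightarrow> transpose S = S \<and> (\<forall>x. x \<noteq> 0 \<longrightarrow> 0 < x \<bullet> (S *v x))"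

definition mat_sqrt :: "real^'k^'k \<Rightarrow> real^'k^'k" where
  "mat_sqrt C = (THE S. psd S \<and> S ** S = C)"

definition spec_rad :: "real^'n^'n \<Rightarrow> real" where
  "spec_rad A = Max {cmod z | z. \<exists>v :: complex^'n. v \<noteq> 0 \<and>
      (\<chi> i j. complex_of_real (A $ i $ j)) *v v = z *s v}"

definition prox_m :: "(real^'k \<Rightarrow> 'y \<Rightarrow> real) \<Rightarrow> real^'k^'k \<Rightarrow> real^'k \<Rightarrow> 'y \<Rightarrow> real^'k" where
  "prox_m l V \<gamma> y = arg_min (\<lambda>\<theta>. l \<theta> y + 1/2 * (((\<gamma> - \<theta>) v* V) \<bullet> (\<gamma> - \<theta>))) (\<lambda>_. True)"

definition f_fun :: "(real^'k \<Rightarrow> 'y \<Rightarrow> real) \<Rightarrow> real^'k^'k \<Rightarrow> real^'k \<Rightarrow> 'y \<Rightarrow> real^'k" where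
  "f_fun l V \<gamma> y = prox_m l V \<gamma> y - \<gamma>"

text \<open>Jacobian in the paper's convention [f']_{k k'} = d f_{k'} / d gamma_k, i.e. the transpose
  of the library's (column convention) jacobian, so that f(gamma+h) ~ f(gamma) + h v* f'.\<close>
definition f_jac :: "(real^'k \<Rightarrow> 'y \<Rightarrow> real) \<Rightarrow> real^'k^'k \<Rightarrow> real^'k \<Rightarrow> 'y \<Rightarrow> real^'k^'k" where
  "f_jac l V \<gamma> y = transpose (jacobian (\<lambda>g. f_fun l V g y) (at \<gamma>))"

definition std_gauss_vec :: "'a measure \<Rightarrow> ('a \<Rightarrow> real^'k) \<Rightarrow> bool" where
  "std_gauss_vec M X \<longleftrightarrow> X \<in> borel_measurable M \<and>
     prob_space.indep_vars M (\<lambda>_. borel) (\<lambda>i \<omega>. X \<omega> $ i) UNIV \<and>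
     (\<forall>i. distributed M lborel (\<lambda>\<omega>. X \<omega> $ i) std_normal_density)"

end

theory Submission
  imports Defs "Jordan_Normal_Form.Spectral_Radius"
begin

hide_const (open) Matrix.mat Matrix.vec Matrix.row Matrix.col
no_notation Matrix.vec_index (infixl "$" 100)
no_notation Matrix.scalar_prod (infix "\<bullet>" 70)


lemma inner_mv: fixes x y :: "real^'n" shows "x \<bullet> (A *v y) = (\<Sum>i\<in>UNIV. \<Sum>j\<in>UNIV. x$i * A$i$j * y$j)"
  by (simp add: inner_vec_def matrix_vector_mult_def sum_distrib_left mult.assoc)

lemma sym_inner: fixes x y :: "real^'n" assumes "transpose A = A" shows "x \<bullet> (A *v y) = y \<bullet> (A *v x)"
proof -
  have s: "A$i$j = A$j$i" for i j using arg_cong[of _ _ "\<lambda>B. B$i$j", OF assms] by (simp add: transpose_def)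
  show ?thesis unfolding inner_mv
    by (subst sum.swap) (simp add: s mult.commute mult.left_commute)
qed

lemma vm_sym: fixes x :: "real^'n" assumes "transpose A = A" shows "x v* A = A *v x"
proof -
  have s: "A$i$j = A$j$i" for i j using arg_cong[of _ _ "\<lambda>B. B$i$j", OF assms] by (simp add: transpose_def)
  show ?thesis by (simp add: Finite_Cartesian_Product.vec_eq_iff vector_matrix_mult_def matrix_vector_mult_def s mult.commute)
qed

lemma inner_transpose: fixes x y :: "real^'n" shows "x \<bullet> (A *v y) = (transpose A *v x) \<bullet> y"
  by (simp add: inner_vec_def matrix_vector_mult_def transpose_def sum_distrib_right sum_distrib_left mult.commute mult.left_commute) (subst sum.swap, simp)

lemma quad_scale: fixes x :: "real^'n" shows "(c *\<^sub>R x) \<bullet> (A *v (c *\<^sub>R x)) = c^2 * (x \<bullet> (A *v x))"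
  by (simp add: matrix_vector_mult_scaleR power2_eq_square inner_scaleR_left inner_scaleR_right)

lemma pd_lower: fixes V :: "real^'k^'k" assumes "pos_def V" shows "\<exists>\<mu>>0. \<forall>x. \<mu> * (norm x)^2 \<le> x \<bullet> (V *v x)"
proof -
  have cont: "continuous_on (sphere 0 1) (\<lambda>x::real^'k. x \<bullet> (V *v x))"
    by (intro continuous_intros linear_continuous_on matrix_vector_mul_bounded_linear)
  have ne: "sphere (0::real^'k) 1 \<noteq> {}" by simp
  obtain x0 where x0: "x0 \<in> sphere 0 1" and mn: "\<forall>y\<in>sphere 0 1. x0 \<bullet> (V *v x0) \<le> y \<bullet> (V *v y)"
    using continuous_attains_inf[OF compact_sphere ne cont] by blast
  have x00: "x0 \<noteq> 0" using x0 by auto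
  define \<mu> where "\<mu> = x0 \<bullet> (V *v x0)"
  have mu: "\<mu> > 0" using assms x00 by (simp add: pos_def_def \<mu>_def)
  have "\<mu> * (norm x)^2 \<le> x \<bullet> (V *v x)" for x
  proof (cases "x = 0")
    case True then show ?thesis by simp
  next
    case False
    define u where "u = (1 / norm x) *\<^sub>R x"
    have "u \<in> sphere 0 1" using False by (simp add: u_def)
    hence "\<mu> \<le> u \<bullet> (V *v u)" using mn \<mu>_def by blast
    also have "\<dots> = (1/norm x)^2 * (x \<bullet> (V *v x))" unfolding u_def by (rule quad_scale)
    finally have "\<mu> * (norm x)^2 \<le> (1/norm x)^2 * (x \<bullet> (V *v x)) * (norm x)^2"
      by (simp add: mult_right_mono)
    also have "\<dots> = x \<bullet> (V *v x)" using False by (simp add: field_simps)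
    finally show ?thesis .
  qed
  with mu show ?thesis by blast
qed

lemma mv_bound: "\<exists>K>0. \<forall>x. norm ((V::real^'k^'k) *v x) \<le> K * norm x"
proof -
  obtain K where "K > 0" "\<forall>x. norm (V *v x) \<le> norm x * K"
    using bounded_linear.pos_bounded[OF matrix_vector_mul_bounded_linear[of V]] by blast
  thus ?thesis by (metis mult.commute)
qed

lemma quad_upper: "\<exists>B>0. \<forall>x. x \<bullet> ((V::real^'k^'k) *v x) \<le> B * (norm x)^2"
proof -
  obtain K where K: "K > 0" "\<forall>x. norm (V *v x) \<le> K * norm x" using mv_bound by blast
  have "x \<bullet> (V *v x) \<le> K * (norm x)^2" for x
  proof -
    have "x \<bullet> (V *v x) \<le> norm x * norm (V *v x)" by (rule norm_cauchy_schwarz)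
    also have "\<dots> \<le> norm x * (K * norm x)" using K by (simp add: mult_left_mono)
    finally show ?thesis by (simp add: power2_eq_square mult.commute mult.left_commute)
  qed
  with K show ?thesis by blast
qed


lemma dq_tendsto:
  fixes F :: "real^'k \<Rightarrow> real^'k"
  assumes "(F has_derivative F') (at x)"
  shows "((\<lambda>t. (1/t) *\<^sub>R (F (x + t *\<^sub>R u) - F x)) \<longlongrightarrow> F' u) (at_right 0)"
proof -
  have bl: "bounded_linear F'" using assms by (rule has_derivative_bounded_linear)
  have d1: "((\<lambda>t::real. x + t *\<^sub>R u) has_derivative (\<lambda>t. t *\<^sub>R u)) (at 0 within {0<..})"
    by (auto intro!: derivative_eq_intros)
  have d2: "(F has_derivative F') (at (x + 0 *\<^sub>R u) within ((\<lambda>t. x + t *\<^sub>R u) ` {0<..}))"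
    using assms by (simp add: has_derivative_at_withinI)
  have "((\<lambda>t. F (x + t *\<^sub>R u)) has_derivative (\<lambda>t. F' (t *\<^sub>R u))) (at 0 within {0<..})"
    using has_derivative_in_compose[OF d1 d2] by (simp add: o_def)
  hence lim: "((\<lambda>y. (F (x + y *\<^sub>R u) - F x - F' (y *\<^sub>R u)) /\<^sub>R norm y) \<longlongrightarrow> 0) (at 0 within {0<..})"
    by (simp add: has_derivative_at_within)
  have ev: "\<forall>\<^sub>F t in at_right 0. (F (x + t *\<^sub>R u) - F x - F' (t *\<^sub>R u)) /\<^sub>R norm t + F' u
              = (1/t) *\<^sub>R (F (x + t *\<^sub>R u) - F x)"
  proof (rule eventually_at_rightI[of 0 1])
    fix t :: real assume "t \<in> {0<..<1}"
    hence t: "t > 0" by simp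
    have "F' (t *\<^sub>R u) = t *\<^sub>R F' u" using bl by (simp add: linear_simps)
    thus "(F (x + t *\<^sub>R u) - F x - F' (t *\<^sub>R u)) /\<^sub>R norm t + F' u = (1/t) *\<^sub>R (F (x + t *\<^sub>R u) - F x)"
      using t by (simp add: algebra_simps divide_inverse)
  qed simp
  have "((\<lambda>y. (F (x + y *\<^sub>R u) - F x - F' (y *\<^sub>R u)) /\<^sub>R norm y + F' u) \<longlongrightarrow> 0 + F' u) (at_right 0)"
    by (intro tendsto_add lim tendsto_const)
  hence "((\<lambda>y. (F (x + y *\<^sub>R u) - F x - F' (y *\<^sub>R u)) /\<^sub>R norm y + F' u) \<longlongrightarrow> F' u) (at_right 0)" by simp
  thus ?thesis using ev by (rule tendsto_cong[THEN iffD1, rotated])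
qed


context
  fixes L :: "real^'k \<Rightarrow> real" and g :: "real^'k \<Rightarrow> real^'k" and V :: "real^'k^'k"
  assumes conv: "convex_on UNIV L"
    and Ld: "\<And>\<theta>. (L has_derivative (\<lambda>h. h \<bullet> g \<theta>)) (at \<theta>)"
    and gd: "\<And>\<theta>. g differentiable (at \<theta>)"
    and pd: "pos_def V"
begin

lemma Vsym: "transpose V = V" using pd by (simp add: pos_def_def)

lemma tangent: "L a + (b - a) \<bullet> g a \<le> L b"
proof -
  define \<phi> where "\<phi> t = L (a + t *\<^sub>R (b - a))" for t
  have cphi: "convex_on UNIV \<phi>"
  proof (rule convex_onI)
    fix t x y :: real assume t: "0 < t" "t < 1"
    have "a + ((1 - t) *\<^sub>R x + t *\<^sub>R y) *\<^sub>R (b - a)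
        = (1 - t) *\<^sub>R (a + x *\<^sub>R (b - a)) + t *\<^sub>R (a + y *\<^sub>R (b - a))"
      by (simp add: algebra_simps)
    thus "\<phi> ((1 - t) *\<^sub>R x + t *\<^sub>R y) \<le> (1 - t) * \<phi> x + t * \<phi> y"
      unfolding \<phi>_def using convex_onD[OF conv, of t] t by simp
  qed simp
  have d1: "((\<lambda>t::real. a + t *\<^sub>R (b - a)) has_derivative (\<lambda>t. t *\<^sub>R (b - a))) (at 0)"
    by (auto intro!: derivative_eq_intros)
  have d2: "(L has_derivative (\<lambda>h. h \<bullet> g a)) (at (a + 0 *\<^sub>R (b - a)))" using Ld by simp
  have "(\<phi> has_derivative (\<lambda>t. (t *\<^sub>R (b - a)) \<bullet> g a)) (at 0)"
    using diff_chain_at[OF d1 d2] by (simp add: o_def \<phi>_def[abs_def])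
  moreover have "(\<lambda>t. (t *\<^sub>R (b - a)) \<bullet> g a) = (*) ((b - a) \<bullet> g a)" by (rule ext) simp
  ultimately have "(\<phi> has_real_derivative ((b - a) \<bullet> g a)) (at 0)"
    by (simp add: has_field_derivative_def)
  from convex_on_imp_above_tangent[OF cphi connected_UNIV _ UNIV_I, of 0, simplified, OF this]
  have "(b - a) \<bullet> g a \<le> \<phi> 1 - \<phi> 0" by (metis mult.right_neutral)
  thus ?thesis by (simp add: \<phi>_def)
qed

lemma mono_g: "0 \<le> (g b - g a) \<bullet> (b - a)"
  using tangent[of a b] tangent[of b a] by (simp add: algebra_simps inner_diff_left inner_diff_right inner_commute)

lemma obj_alt: "L \<theta> + 1/2 * (((\<gamma> - \<theta>) v* V) \<bullet> (\<gamma> - \<theta>)) = L \<theta> + 1/2 * ((\<gamma> - \<theta>) \<bullet> (V *v (\<gamma> - \<theta>)))"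
  by (simp add: vm_sym[OF Vsym] inner_commute)

lemma obj_deriv: "((\<lambda>\<theta>. L \<theta> + 1/2 * (((\<gamma> - \<theta>) v* V) \<bullet> (\<gamma> - \<theta>))) has_derivative
    (\<lambda>h. h \<bullet> g \<theta> - h \<bullet> (V *v (\<gamma> - \<theta>)))) (at \<theta>)"
proof -
  have bl: "bounded_linear ((*v) V)" by (rule matrix_vector_mul_bounded_linear)
  have dm: "((\<lambda>\<theta>::real^'k. \<gamma> - \<theta>) has_derivative (\<lambda>h. - h)) (at \<theta>)"
    by (auto intro!: derivative_eq_intros)
  have dV: "((\<lambda>\<theta>. V *v (\<gamma> - \<theta>)) has_derivative (\<lambda>h. V *v (- h))) (at \<theta>)"
    using bounded_linear.has_derivative[OF bl dm] .
  have "((\<lambda>\<theta>. L \<theta> + 1/2 * ((\<gamma> - \<theta>) \<bullet> (V *v (\<gamma> - \<theta>)))) has_derivative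
    (\<lambda>h. h \<bullet> g \<theta> + 1/2 * ((\<gamma> - \<theta>) \<bullet> (V *v (- h)) + (- h) \<bullet> (V *v (\<gamma> - \<theta>))))) (at \<theta>)"
    by (intro has_derivative_add Ld has_derivative_mult_right has_derivative_inner dm dV)
  moreover have "(\<lambda>h. h \<bullet> g \<theta> + 1/2 * ((\<gamma> - \<theta>) \<bullet> (V *v (- h)) + (- h) \<bullet> (V *v (\<gamma> - \<theta>))))
      = (\<lambda>h. h \<bullet> g \<theta> - h \<bullet> (V *v (\<gamma> - \<theta>)))"
  proof
    fix h
    have "(\<gamma> - \<theta>) \<bullet> (V *v (- h)) = (- h) \<bullet> (V *v (\<gamma> - \<theta>))" by (rule sym_inner[OF Vsym])
    thus "h \<bullet> g \<theta> + 1/2 * ((\<gamma> - \<theta>) \<bullet> (V *v (- h)) + (- h) \<bullet> (V *v (\<gamma> - \<theta>)))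
      = h \<bullet> g \<theta> - h \<bullet> (V *v (\<gamma> - \<theta>))" by simp
  qed
  ultimately show ?thesis unfolding obj_alt by simp
qed


lemma obj_cont: "continuous_on S (\<lambda>\<theta>. L \<theta> + 1/2 * (((\<gamma> - \<theta>) v* V) \<bullet> (\<gamma> - \<theta>)))"
  by (rule continuous_at_imp_continuous_on, intro ballI has_derivative_continuous[OF obj_deriv])

lemma exists_min: "\<exists>\<theta>. \<forall>\<theta>'. L \<theta> + 1/2 * (((\<gamma> - \<theta>) v* V) \<bullet> (\<gamma> - \<theta>)) \<le> L \<theta>' + 1/2 * (((\<gamma> - \<theta>') v* V) \<bullet> (\<gamma> - \<theta>'))"
proof -
  define ob where "ob \<theta> = L \<theta> + 1/2 * (((\<gamma> - \<theta>) v* V) \<bullet> (\<gamma> - \<theta>))" for \<theta>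
  obtain \<mu> where mu: "\<mu> > 0" "\<And>x. \<mu> * (norm x)^2 \<le> x \<bullet> (V *v x)" using pd_lower[OF pd] by blast
  define G where "G = norm (g 0)"
  define c where "c = norm \<gamma>"
  define E where "E = L \<gamma> - L 0 + \<mu>/2 * c^2"
  define R where "R = max (max 1 (4*(\<bar>E\<bar> + G)/\<mu>)) c"
  have far: "ob \<theta> > L \<gamma>" if th: "norm \<theta> > R" for \<theta>
  proof -
    define t where "t = norm \<theta>"
    have t1: "t > 1" and tc: "t > c" and tE: "t > 4*(\<bar>E\<bar> + G)/\<mu>" using th by (auto simp: R_def t_def)
    have G0: "G \<ge> 0" by (simp add: G_def)
    have "L 0 + \<theta> \<bullet> g 0 \<le> L \<theta>" using tangent[of 0 \<theta>] by simp
    moreover have "- (t * G) \<le> \<theta> \<bullet> g 0"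
      using Cauchy_Schwarz_ineq2[of \<theta> "g 0"] by (simp add: t_def G_def abs_le_iff)
    moreover have "t - c \<le> norm (\<gamma> - \<theta>)"
      using norm_triangle_ineq2[of \<theta> \<gamma>] by (simp add: t_def c_def norm_minus_commute)
    hence "(t - c)^2 \<le> (norm (\<gamma> - \<theta>))^2" using tc by (intro power_mono) auto
    hence A1: "\<mu> * (t - c)^2 \<le> \<mu> * (norm (\<gamma> - \<theta>))^2" using mu(1) by (intro mult_left_mono) auto
    have A2: "(t - c)^2 - (t^2/2 - c^2) = (t - 2*c)^2/2" by (simp add: power2_eq_square field_simps)
    have "(t - 2*c)^2 \<ge> 0" by simp
    hence "t^2/2 - c^2 \<le> (t - c)^2" using A2 by linarith
    hence A3: "\<mu> * (t^2/2 - c^2) \<le> \<mu> * (t - c)^2" using mu(1) by (intro mult_left_mono) auto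
    have A4: "\<mu> * (t^2/2 - c^2) = \<mu> * t^2 / 2 - \<mu> * c^2" by (simp add: algebra_simps)
    have Q: "\<mu> * t^2 / 2 - \<mu> * c^2 \<le> (\<gamma> - \<theta>) \<bullet> (V *v (\<gamma> - \<theta>))"
      using A1 A3 A4 mu(2)[of "\<gamma> - \<theta>"] by linarith
    moreover have "\<mu> * t^2 / 4 > E + t * G"
    proof -
      have "\<mu> * t / 4 > \<bar>E\<bar> + G" using tE mu(1) by (simp add: field_simps)
      hence "t * (\<mu> * t / 4) > t * (\<bar>E\<bar> + G)" using t1 by simp
      moreover have "t * \<bar>E\<bar> \<ge> \<bar>E\<bar>" using t1 by (simp add: mult_le_cancel_right1)
      moreover have "\<bar>E\<bar> \<ge> E" by simp
      moreover have "t * (\<mu> * t / 4) = \<mu> * t^2 / 4" by (simp add: power2_eq_square)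
      moreover have "t * (\<bar>E\<bar> + G) = t * \<bar>E\<bar> + t * G" by (simp add: algebra_simps)
      ultimately show ?thesis by linarith
    qed
    ultimately have "L \<theta> + 1/2 * ((\<gamma> - \<theta>) \<bullet> (V *v (\<gamma> - \<theta>))) > L \<gamma>"
      unfolding E_def by linarith
    thus ?thesis unfolding ob_def obj_alt .
  qed
  have Kc: "compact (cball (0::real^'k) R)" by simp
  have gK: "\<gamma> \<in> cball 0 R" by (simp add: R_def c_def)
  hence Kne: "cball (0::real^'k) R \<noteq> {}" by blast
  obtain \<theta>s where ths: "\<theta>s \<in> cball 0 R" and mn: "\<forall>y\<in>cball 0 R. ob \<theta>s \<le> ob y"
    using continuous_attains_inf[OF Kc Kne obj_cont[of _ \<gamma>, folded ob_def[abs_def]]] by blast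
  have "ob \<theta>s \<le> ob \<theta>'" for \<theta>'
  proof (cases "\<theta>' \<in> cball 0 R")
    case True thus ?thesis using mn by blast
  next
    case False
    hence "ob \<theta>' > L \<gamma>" using far by simp
    moreover have "ob \<gamma> = L \<gamma>" by (simp add: ob_def)
    moreover have "ob \<theta>s \<le> ob \<gamma>" using mn gK by blast
    ultimately show ?thesis by linarith
  qed
  thus ?thesis unfolding ob_def by blast
qed


abbreviation "mm \<gamma> \<equiv> arg_min (\<lambda>\<theta>. L \<theta> + 1/2 * (((\<gamma> - \<theta>) v* V) \<bullet> (\<gamma> - \<theta>))) (\<lambda>_. True)"

lemma m_min: "L (mm \<gamma>) + 1/2 * (((\<gamma> - mm \<gamma>) v* V) \<bullet> (\<gamma> - mm \<gamma>)) \<le> L \<theta>' + 1/2 * (((\<gamma> - \<theta>') v* V) \<bullet> (\<gamma> - \<theta>'))"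
proof -
  let ?f = "\<lambda>\<theta>. L \<theta> + 1/2 * (((\<gamma> - \<theta>) v* V) \<bullet> (\<gamma> - \<theta>))"
  obtain \<theta>0 where "\<forall>\<theta>'. ?f \<theta>0 \<le> ?f \<theta>'" using exists_min by blast
  hence "is_arg_min ?f (\<lambda>_. True) \<theta>0" by (simp add: is_arg_min_def not_less)
  hence "is_arg_min ?f (\<lambda>_. True) (mm \<gamma>)" unfolding arg_min_def by (rule someI)
  thus ?thesis by (simp add: is_arg_min_def not_less)
qed

lemma m_stat: "g (mm \<gamma>) = V *v (\<gamma> - mm \<gamma>)"
proof -
  have "(\<lambda>h. h \<bullet> g (mm \<gamma>) - h \<bullet> (V *v (\<gamma> - mm \<gamma>))) = (\<lambda>h. 0)"
    by (rule has_derivative_local_min[OF obj_deriv]) (use m_min in \<open>simp add: always_eventually\<close>)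
  from fun_cong[OF this, of "g (mm \<gamma>) - V *v (\<gamma> - mm \<gamma>)"]
  have "(g (mm \<gamma>) - V *v (\<gamma> - mm \<gamma>)) \<bullet> (g (mm \<gamma>) - V *v (\<gamma> - mm \<gamma>)) = 0"
    by (simp only: inner_diff_right[symmetric])
  thus ?thesis by (simp only: inner_eq_zero_iff right_minus_eq)
qed

lemma firm_aux:
  fixes p q a b :: "real^'k"
  assumes "0 \<le> (g p - g q) \<bullet> (p - q)" "g p = V *v (a - p)" "g q = V *v (b - q)"
  shows "(p - q) \<bullet> (V *v (p - q)) \<le> (p - q) \<bullet> (V *v (a - b))"
proof -
  have "g p - g q = V *v ((a - b) - (p - q))"
    using assms(2,3) by (simp add: matrix_vector_mult_diff_distrib algebra_simps)
  with assms(1) have "0 \<le> (p - q) \<bullet> (V *v ((a - b) - (p - q)))" by (simp only: inner_commute)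
  moreover have "(p - q) \<bullet> (V *v ((a - b) - (p - q))) = (p - q) \<bullet> (V *v (a - b)) - (p - q) \<bullet> (V *v (p - q))"
    by (simp only: matrix_vector_mult_diff_distrib inner_diff_right)
  ultimately show ?thesis by linarith
qed

lemma firm: "(mm a - mm b) \<bullet> (V *v (mm a - mm b)) \<le> (mm a - mm b) \<bullet> (V *v (a - b))"
  by (rule firm_aux[OF mono_g m_stat m_stat])

lemma m_lip: "\<exists>C\<ge>0. \<forall>a b. norm (mm a - mm b) \<le> C * norm (a - b)"
proof -
  obtain \<mu> where mu: "\<mu> > 0" "\<And>x. \<mu> * (norm x)^2 \<le> x \<bullet> (V *v x)" using pd_lower[OF pd] by blast
  obtain K where K: "K > 0" "\<And>x. norm (V *v x) \<le> K * norm x" using mv_bound by blast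
  have "norm (mm a - mm b) \<le> (K / \<mu>) * norm (a - b)" for a b
  proof -
    define d where "d = mm a - mm b"
    have "\<mu> * (norm d)^2 \<le> d \<bullet> (V *v (a - b))" using mu(2)[of d] firm[of a b] by (simp add: d_def)
    also have "\<dots> \<le> norm d * norm (V *v (a - b))" by (rule norm_cauchy_schwarz)
    also have "\<dots> \<le> norm d * (K * norm (a - b))" using K(2) by (simp add: mult_left_mono)
    finally have "\<mu> * norm d * norm d \<le> norm d * (K * norm (a - b))" by (simp add: power2_eq_square mult.assoc)
    hence "\<mu> * norm d \<le> K * norm (a - b)" if "norm d > 0"
      using that by (simp add: mult.commute mult.left_commute)
    hence "\<mu> * norm d \<le> K * norm (a - b)" using K(1) by (cases "norm d > 0") auto
    thus ?thesis using mu(1) by (simp add: d_def field_simps)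
  qed
  moreover have "K / \<mu> \<ge> 0" using K(1) mu(1) by simp
  ultimately show ?thesis by blast
qed

lemma m_cont: "isCont mm \<gamma>"
proof -
  obtain C where C: "C \<ge> 0" "\<And>a b. norm (mm a - mm b) \<le> C * norm (a - b)" using m_lip by blast
  have "C-lipschitz_on UNIV mm" using C by (auto simp: lipschitz_on_def dist_norm)
  hence "continuous_on UNIV mm" by (rule lipschitz_on_continuous_on)
  thus ?thesis by (simp add: continuous_on_eq_continuous_at)
qed

lemma g'_mono: assumes "(g has_derivative g') (at \<theta>)" shows "0 \<le> h \<bullet> g' h"
proof -
  have lim: "((\<lambda>t. ((1/t) *\<^sub>R (g (\<theta> + t *\<^sub>R h) - g \<theta>)) \<bullet> h) \<longlongrightarrow> g' h \<bullet> h) (at_right 0)"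
    by (intro tendsto_inner dq_tendsto[OF assms] tendsto_const)
  have ev: "\<forall>\<^sub>F t in at_right 0. 0 \<le> ((1/t) *\<^sub>R (g (\<theta> + t *\<^sub>R h) - g \<theta>)) \<bullet> h"
  proof (rule eventually_at_rightI[of 0 1])
    fix t :: real assume "t \<in> {0<..<1}"
    hence t: "t > 0" by simp
    have "0 \<le> (g (\<theta> + t *\<^sub>R h) - g \<theta>) \<bullet> ((\<theta> + t *\<^sub>R h) - \<theta>)" by (rule mono_g)
    hence "0 \<le> t * ((g (\<theta> + t *\<^sub>R h) - g \<theta>) \<bullet> h)" by simp
    hence "0 \<le> (g (\<theta> + t *\<^sub>R h) - g \<theta>) \<bullet> h" using t by (simp add: zero_le_mult_iff)
    thus "0 \<le> ((1/t) *\<^sub>R (g (\<theta> + t *\<^sub>R h) - g \<theta>)) \<bullet> h" using t by simp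
  qed simp
  have "0 \<le> g' h \<bullet> h" by (rule tendsto_lowerbound[OF lim ev]) simp
  thus ?thesis by (simp add: inner_commute)
qed

lemma m_deriv: "\<exists>D. (mm has_derivative D) (at \<gamma>)"
proof -
  have ker: "\<forall>x. V *v x = 0 \<longrightarrow> x = 0"
  proof (intro allI impI)
    fix x assume "V *v x = 0"
    hence "x \<bullet> (V *v x) = 0" by simp
    thus "x = 0" using pd by (auto simp: pos_def_def)
  qed
  then obtain W where WV: "W ** V = mat 1" using matrix_left_invertible_ker by blast
  hence VW: "V ** W = mat 1" by (simp add: matrix_left_right_inverse)
  define f where "f \<theta> = \<theta> + W *v g \<theta>" for \<theta>
  have fm: "f (mm z) = z" for z
  proof -
    have "W *v g (mm z) = W *v (V *v (z - mm z))" by (rule arg_cong[OF m_stat])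
    also have "\<dots> = z - mm z" by (simp add: matrix_vector_mul_assoc WV)
    finally show ?thesis by (simp add: f_def)
  qed
  obtain g' where g': "(g has_derivative g') (at (mm \<gamma>))" using gd[of "mm \<gamma>"] by (auto simp: differentiable_def)
  define f' where "f' h = h + W *v g' h" for h
  have fd: "(f has_derivative f') (at (mm \<gamma>))"
    unfolding f_def[abs_def] f'_def[abs_def]
    by (intro has_derivative_add has_derivative_ident bounded_linear.has_derivative[OF matrix_vector_mul_bounded_linear g'])
  have lin: "linear f'" using has_derivative_bounded_linear[OF fd] by (simp add: bounded_linear.linear)
  have z: "h = 0" if "f' h = 0" for h
  proof -
    have "V *v f' h = V *v h + g' h" by (simp add: f'_def matrix_vector_right_distrib matrix_vector_mul_assoc VW)
    hence "V *v h + g' h = 0" using that by simp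
    hence "h \<bullet> (V *v h) + h \<bullet> g' h = 0" by (metis inner_right_distrib inner_zero_right)
    moreover have "0 \<le> h \<bullet> g' h" by (rule g'_mono[OF g'])
    ultimately have "h \<bullet> (V *v h) \<le> 0" by linarith
    thus "h = 0" using pd by (auto simp: pos_def_def not_less[symmetric])
  qed
  have "inj f'" using lin z by (simp add: linear_injective_0)
  then obtain G' where G': "linear G'" "G' \<circ> f' = id"
    using real_vector.linear_injective_left_inverse[OF lin] by blast
  have "(mm has_derivative G') (at \<gamma>)"
    by (rule has_derivative_inverse_basic[OF fd _ G'(2) m_cont open_UNIV UNIV_I])
       (use G'(1) fm in \<open>auto simp: linear_conv_bounded_linear\<close>)
  thus ?thesis by blast
qed

lemma key: assumes D: "(mm has_derivative D) (at \<gamma>)"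
  shows "(D u) \<bullet> (V *v (D u)) \<le> (D u) \<bullet> (V *v u)"
proof -
  define dl where "dl t = (1/t) *\<^sub>R (mm (\<gamma> + t *\<^sub>R u) - mm \<gamma>)" for t
  have l1: "(dl \<longlongrightarrow> D u) (at_right 0)" unfolding dl_def by (rule dq_tendsto[OF D])
  have lim: "((\<lambda>t. dl t \<bullet> (V *v u) - dl t \<bullet> (V *v dl t)) \<longlongrightarrow> D u \<bullet> (V *v u) - D u \<bullet> (V *v D u)) (at_right 0)"
    by (intro tendsto_intros l1 bounded_linear.tendsto[OF matrix_vector_mul_bounded_linear])
  have ev: "\<forall>\<^sub>F t in at_right 0. 0 \<le> dl t \<bullet> (V *v u) - dl t \<bullet> (V *v dl t)"
  proof (rule eventually_at_rightI[of 0 1])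
    fix t :: real assume "t \<in> {0<..<1}"
    hence t: "t > 0" by simp
    have De: "mm (\<gamma> + t *\<^sub>R u) - mm \<gamma> = t *\<^sub>R dl t" using t by (simp add: dl_def)
    have "(t *\<^sub>R dl t) \<bullet> (V *v (t *\<^sub>R dl t)) \<le> (t *\<^sub>R dl t) \<bullet> (V *v ((\<gamma> + t *\<^sub>R u) - \<gamma>))"
      using firm[of "\<gamma> + t *\<^sub>R u" \<gamma>] unfolding De .
    hence "t^2 * (dl t \<bullet> (V *v dl t)) \<le> t^2 * (dl t \<bullet> (V *v u))"
      by (simp add: matrix_vector_mult_scaleR power2_eq_square mult.assoc)
    hence "dl t \<bullet> (V *v dl t) \<le> dl t \<bullet> (V *v u)" using t by simp
    thus "0 \<le> dl t \<bullet> (V *v u) - dl t \<bullet> (V *v dl t)" by simp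
  qed simp
  have "0 \<le> D u \<bullet> (V *v u) - D u \<bullet> (V *v D u)" by (rule tendsto_lowerbound[OF lim ev]) simp
  thus ?thesis by simp
qed

end

lemma fjac_key:
  fixes l :: "real^'k \<Rightarrow> 'y \<Rightarrow> real" and V :: "real^'k^'k"
  assumes conv: "convex_on UNIV (\<lambda>\<theta>. l \<theta> y)"
    and l1: "\<And>\<theta>. ((\<lambda>t. l t y) has_derivative (\<lambda>h. h \<bullet> l' \<theta>)) (at \<theta>)"
    and l2: "\<And>\<theta>. l' differentiable (at \<theta>)"
    and pd: "pos_def V"
  shows "(transpose (f_jac l V \<gamma> y) *v u) \<bullet> (V *v (transpose (f_jac l V \<gamma> y) *v u))
          \<le> - ((transpose (f_jac l V \<gamma> y) *v u) \<bullet> (V *v u))"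
proof -
  obtain D where D: "((\<lambda>\<gamma>. prox_m l V \<gamma> y) has_derivative D) (at \<gamma>)"
    using m_deriv[OF conv l1 l2 pd, of \<gamma>] unfolding prox_m_def by blast
  have fd: "((\<lambda>g. f_fun l V g y) has_derivative (\<lambda>h. D h - h)) (at \<gamma>)"
    unfolding f_fun_def by (intro has_derivative_diff D has_derivative_ident)
  hence "(\<lambda>g. f_fun l V g y) differentiable (at \<gamma>)" by (auto simp: differentiable_def)
  hence hj: "((\<lambda>g. f_fun l V g y) has_derivative (*v) (jacobian (\<lambda>g. f_fun l V g y) (at \<gamma>))) (at \<gamma>)"
    by (simp add: jacobian_works)
  have e1: "(\<lambda>h. D h - h) = frechet_derivative (\<lambda>g. f_fun l V g y) (at \<gamma>)" by (rule frechet_derivative_at[OF fd])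
  have e2: "(*v) (jacobian (\<lambda>g. f_fun l V g y) (at \<gamma>)) = frechet_derivative (\<lambda>g. f_fun l V g y) (at \<gamma>)"
    by (rule frechet_derivative_at[OF hj])
  have je: "(*v) (jacobian (\<lambda>g. f_fun l V g y) (at \<gamma>)) = (\<lambda>h. D h - h)" using e1 e2 by simp
  have tj: "transpose (f_jac l V \<gamma> y) = jacobian (\<lambda>g. f_fun l V g y) (at \<gamma>)"
    by (simp add: f_jac_def)
  have J: "transpose (f_jac l V \<gamma> y) *v u = D u - u" unfolding tj using fun_cong[OF je, of u] by simp
  have k: "D u \<bullet> (V *v D u) \<le> D u \<bullet> (V *v u)"
    using key[OF conv l1 l2 pd D[unfolded prox_m_def]] .
  have Vs: "transpose V = V" using pd by (simp add: pos_def_def)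
  have s: "u \<bullet> (V *v D u) = D u \<bullet> (V *v u)" by (rule sym_inner[OF Vs])
  have "(D u - u) \<bullet> (V *v (D u - u)) = D u \<bullet> (V *v D u) - D u \<bullet> (V *v u) - (u \<bullet> (V *v D u) - u \<bullet> (V *v u))"
    by (simp only: matrix_vector_mult_diff_distrib inner_diff_left inner_diff_right)
  moreover have "(D u - u) \<bullet> (V *v u) = D u \<bullet> (V *v u) - u \<bullet> (V *v u)" by (simp only: inner_diff_left)
  ultimately show ?thesis unfolding J using k s by linarith
qed




lemma eig_set_fin_ne:
  fixes A :: "complex^'n^'n"
  defines "E \<equiv> {z. \<exists>v::complex^'n. v \<noteq> 0 \<and> A *v v = z *s v}"
  shows "finite E \<and> E \<noteq> {}"
proof -
  define n where "n = CARD('n)"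
  obtain h :: "'n \<Rightarrow> nat" where h: "bij_betw h UNIV {0..<n}"
    using ex_bij_betw_finite_nat[of "UNIV::'n set"] n_def by auto
  define g where "g = inv_into UNIV h"
  have g: "bij_betw g {0..<n} UNIV" using h g_def by (simp add: bij_betw_inv_into)
  have gh: "g (h k) = k" for k using h g_def by (simp add: bij_betw_def)
  have hg: "i < n \<Longrightarrow> h (g i) = i" for i using h g_def by (simp add: bij_betw_inv_into_right)
  have hn: "h k < n" for k using h by (auto simp: bij_betw_def)
  have gn: "i < n \<Longrightarrow> g i \<in> UNIV" for i by simp
  define B where "B = Matrix.mat n n (\<lambda>(i,j). A $ g i $ g j)"
  have Bc: "B \<in> carrier_mat n n" by (simp add: B_def)
  have reidx: "(\<Sum>j\<in>{0..<n}. F (g j)) = (\<Sum>k\<in>UNIV. F k)" for F :: "'n \<Rightarrow> complex"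
    using sum.reindex_bij_betw[OF g, of F] by simp
  have "E = spectrum B"
  proof
    show "E \<subseteq> spectrum B"
    proof
      fix z assume "z \<in> E"
      then obtain v :: "complex^'n" where v0: "v \<noteq> 0" and ev: "A *v v = z *s v" by (auto simp: E_def)
      define w where "w = Matrix.vec n (\<lambda>i. v $ g i)"
      have "w \<noteq> 0\<^sub>v n"
      proof
        assume "w = 0\<^sub>v n"
        have "v $ k = 0" for k
        proof -
          have "v $ k = vec_index w (h k)" using hn[of k] gh[of k] by (simp add: w_def)
          also have "\<dots> = 0" using \<open>w = 0\<^sub>v n\<close> hn[of k] by simp
          finally show ?thesis .
        qed
        hence "v = 0" by (simp add: Finite_Cartesian_Product.vec_eq_iff)
        with v0 show False by simp
      qed
      moreover have "B *\<^sub>v w = z \<cdot>\<^sub>v w"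
      proof (rule eq_vecI)
        fix i assume i: "i < dim_vec (z \<cdot>\<^sub>v w)"
        hence i': "i < n" by (simp add: w_def)
        have "vec_index (B *\<^sub>v w) i = (\<Sum>j\<in>{0..<n}. A $ g i $ g j * v $ g j)"
          using i' by (simp add: B_def w_def scalar_prod_def)
        also have "\<dots> = (\<Sum>k\<in>UNIV. A $ g i $ k * v $ k)" by (rule reidx)
        also have "\<dots> = (A *v v) $ g i" by (simp add: matrix_vector_mult_def)
        also have "\<dots> = z * v $ g i" using ev by simp
        also have "\<dots> = vec_index (z \<cdot>\<^sub>v w) i" using i' by (simp add: w_def)
        finally show "vec_index (B *\<^sub>v w) i = vec_index (z \<cdot>\<^sub>v w) i" .
      qed (simp add: B_def w_def)
      ultimately have "eigenvector B w z" by (simp add: eigenvector_def B_def w_def)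
      thus "z \<in> spectrum B" by (auto simp: spectrum_def eigenvalue_def)
    qed
  next
    show "spectrum B \<subseteq> E"
    proof
      fix z assume "z \<in> spectrum B"
      then obtain w where ew: "eigenvector B w z" by (auto simp: spectrum_def eigenvalue_def)
      hence wc: "w \<in> carrier_vec n" and w0: "w \<noteq> 0\<^sub>v n" and ev: "B *\<^sub>v w = z \<cdot>\<^sub>v w"
        by (auto simp: eigenvector_def B_def)
      define v :: "complex^'n" where "v = (\<chi> k. vec_index w (h k))"
      have "v \<noteq> 0"
      proof
        assume "v = 0"
        have "vec_index w i = 0" if "i < n" for i
        proof -
          have "vec_index w i = v $ g i" using hg[OF that] by (simp add: v_def)
          also have "\<dots> = 0" using \<open>v = 0\<close> by simp
          finally show ?thesis .
        qed
        hence "w = 0\<^sub>v n" using wc by (intro eq_vecI) auto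
        with w0 show False by simp
      qed
      moreover have "A *v v = z *s v"
      proof (subst Finite_Cartesian_Product.vec_eq_iff, rule allI)
        fix k
        have "(A *v v) $ k = (\<Sum>k'\<in>UNIV. A $ k $ k' * vec_index w (h k'))"
          by (simp add: matrix_vector_mult_def v_def)
        also have "\<dots> = (\<Sum>j\<in>{0..<n}. A $ g (h k) $ g j * vec_index w (h (g j)))"
          using reidx[of "\<lambda>k'. A $ k $ k' * vec_index w (h k')"] gh by simp
        also have "\<dots> = (\<Sum>j\<in>{0..<n}. A $ g (h k) $ g j * vec_index w j)"
          by (rule sum.cong) (auto simp: hg)
        also have "\<dots> = vec_index (B *\<^sub>v w) (h k)"
          using hn[of k] wc by (simp add: B_def scalar_prod_def)
        also have "\<dots> = z * vec_index w (h k)" using ev hn[of k] wc by simp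
        finally show "(A *v v) $ k = (z *s v) $ k" by (simp add: v_def)
      qed
      ultimately show "z \<in> E" by (auto simp: E_def)
    qed
  qed
  moreover have "n > 0" by (simp add: n_def)
  ultimately show ?thesis using card_finite_spectrum(1)[OF Bc] spectrum_non_empty[OF Bc] by simp
qed


definition mat_of :: "real^('k\<times>'k) \<Rightarrow> real^'k^'k" where "mat_of R = (\<chi> p q. R$(p,q))"
definition vec_of :: "real^'k^'k \<Rightarrow> real^('k\<times>'k)" where "vec_of A = (\<chi> pq. A$fst pq$snd pq)"
definition bil :: "real^('k\<times>'k) \<Rightarrow> real^'k \<Rightarrow> real^'k \<Rightarrow> real" where "bil R x y = x \<bullet> (mat_of R *v y)"

lemma mat_vec_of: "mat_of (vec_of A) = A"
  by (simp add: mat_of_def vec_of_def Finite_Cartesian_Product.vec_eq_iff)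

lemma mat_of_add: "mat_of (R + S) = mat_of R + mat_of S"
  by (simp add: mat_of_def Finite_Cartesian_Product.vec_eq_iff)

lemma mat_of_scale: "mat_of (c *\<^sub>R R) = c *\<^sub>R mat_of R"
  by (simp add: mat_of_def Finite_Cartesian_Product.vec_eq_iff)

lemma smv: "(c *\<^sub>R A) *v x = c *\<^sub>R (A *v (x::real^'n))"
  by (simp add: Finite_Cartesian_Product.vec_eq_iff matrix_vector_mult_def sum_distrib_left mult.assoc)

lemma kron_mv: "mat_of (kron A B *v R) = A ** mat_of R ** transpose B"
proof -
  have "(kron A B *v R) $ (i, j) = (A ** mat_of R ** transpose B) $ i $ j" for i j
  proof -
    have "(kron A B *v R) $ (i, j) = (\<Sum>x\<in>UNIV \<times> UNIV. A $ i $ fst x * B $ j $ snd x * R $ x)"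
      by (simp add: kron_def matrix_vector_mult_def UNIV_Times_UNIV)
    also have "\<dots> = (\<Sum>p\<in>UNIV. \<Sum>q\<in>UNIV. A $ i $ p * B $ j $ q * R $ (p, q))"
      by (simp add: sum.cartesian_product case_prod_beta)
    also have "\<dots> = (\<Sum>q\<in>UNIV. \<Sum>p\<in>UNIV. A $ i $ p * R $ (p, q) * B $ j $ q)"
      by (subst sum.swap) (simp add: mult_ac)
    also have "\<dots> = (A ** mat_of R ** transpose B) $ i $ j"
      by (simp add: matrix_matrix_mult_def mat_of_def transpose_def sum_distrib_right)
    finally show ?thesis .
  qed
  thus ?thesis by (simp add: mat_of_def Finite_Cartesian_Product.vec_eq_iff)
qed

lemma bil_kron: "bil (kron F F *v R) u w = bil R (transpose F *v u) (transpose F *v w)"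
proof -
  have e: "(F ** mat_of R ** transpose F) *v w = F *v (mat_of R *v (transpose F *v w))"
    by (simp only: matrix_vector_mul_assoc matrix_mul_assoc)
  have "bil (kron F F *v R) u w = u \<bullet> (F *v (mat_of R *v (transpose F *v w)))"
    by (simp only: bil_def kron_mv e)
  also have "\<dots> = bil R (transpose F *v u) (transpose F *v w)"
    by (simp add: bil_def inner_transpose)
  finally show ?thesis .
qed

lemma bil_add: "bil (R + S) u w = bil R u w + bil S u w"
  by (simp add: bil_def mat_of_add matrix_vector_mult_add_rdistrib inner_add_right)

lemma bil_scale: "bil (c *\<^sub>R R) u w = c * bil R u w"
  by (simp add: bil_def mat_of_scale smv)

lemma bl_bilK: "bounded_linear (\<lambda>K::real^('k::finite\<times>'k)^('k\<times>'k). bil (K *v R) u w)"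
proof -
  have "linear (\<lambda>K::real^('k::finite\<times>'k)^('k\<times>'k). bil (K *v R) u w)"
    by (rule linearI) (simp_all add: matrix_vector_mult_add_rdistrib bil_add smv bil_scale)
  thus ?thesis by (simp add: linear_conv_bounded_linear)
qed

lemma bl_lin2: "bounded_linear (\<lambda>A::real^'k::finite^'k. u \<bullet> (A *v z))"
proof -
  have "linear (\<lambda>A::real^'k::finite^'k. u \<bullet> (A *v z))"
    by (rule linearI) (simp_all add: matrix_vector_mult_add_rdistrib inner_add_right smv)
  thus ?thesis by (simp add: linear_conv_bounded_linear)
qed

lemma bil_axis: "bil R (axis i 1) (axis j 1) = R $ (i, j)"
  by (simp add: bil_def inner_axis' matrix_vector_mult_basis column_def mat_of_def)

lemma bil_bound: "\<exists>K>0. \<forall>x y. \<bar>bil R x y\<bar> \<le> K * norm x * norm y"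
proof -
  obtain K where K: "K > 0" "\<And>x. norm (mat_of R *v x) \<le> K * norm x" using mv_bound by blast
  have "\<bar>bil R x y\<bar> \<le> K * norm x * norm y" for x y
  proof -
    have "\<bar>bil R x y\<bar> \<le> norm x * norm (mat_of R *v y)" unfolding bil_def by (rule Cauchy_Schwarz_ineq2)
    also have "\<dots> \<le> norm x * (K * norm y)" using K(2) by (simp add: mult_left_mono)
    finally show ?thesis by (simp add: mult_ac)
  qed
  with K(1) show ?thesis by blast
qed


lemma cmv_scale: "(A::complex^'n^'m) *v (c *s v) = c *s (A *v v)"
  by (simp add: Finite_Cartesian_Product.vec_eq_iff matrix_vector_mult_def sum_distrib_left mult_ac)

lemma re_mv:
  fixes T :: "real^'n^'n" and x :: "complex^'n"
  shows "T *v (\<chi> p. Re (x $ p)) = (\<chi> p. Re (((\<chi> i j. complex_of_real (T $ i $ j)) *v x) $ p))"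
  by (simp add: Finite_Cartesian_Product.vec_eq_iff matrix_vector_mult_def Re_sum)

lemma im_mv:
  fixes T :: "real^'n^'n" and x :: "complex^'n"
  shows "T *v (\<chi> p. Im (x $ p)) = (\<chi> p. Im (((\<chi> i j. complex_of_real (T $ i $ j)) *v x) $ p))"
  by (simp add: Finite_Cartesian_Product.vec_eq_iff matrix_vector_mult_def Im_sum)

lemma main_abstract:
  fixes M :: "'a measure" and F :: "'a \<Rightarrow> real^'k^'k" and V :: "real^'k^'k"
  assumes pd: "pos_def V" and alpha: "\<alpha> > 0" and lam: "lambda0 > 0"
    and iF: "integrable M F" and iK: "integrable M (\<lambda>\<omega>. kron (F \<omega>) (F \<omega>))"
    and Veq: "V = lambda0 *\<^sub>R mat 1 - \<alpha> *\<^sub>R ((\<integral>\<omega>. F \<omega> \<partial>M) ** V)"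
    and pt: "\<And>\<omega> u. (transpose (F \<omega>) *v u) \<bullet> (V *v (transpose (F \<omega>) *v u))
                 \<le> - ((transpose (F \<omega>) *v u) \<bullet> (V *v u))"
  shows "spec_rad (\<alpha> *\<^sub>R (\<integral>\<omega>. kron (F \<omega>) (F \<omega>) \<partial>M)) < 1"
proof -
  define J where "J \<omega> = transpose (F \<omega>)" for \<omega>
  define q where "q x = x \<bullet> (V *v x)" for x
  define IK where "IK = (\<integral>\<omega>. kron (F \<omega>) (F \<omega>) \<partial>M)"
  define T where "T = \<alpha> *\<^sub>R IK"
  have Vs: "transpose V = V" using pd by (simp add: pos_def_def)
  have q0: "q x \<ge> 0" for x using pd by (cases "x = 0") (auto simp: q_def pos_def_def less_imp_le)
  have iB: "integrable M (\<lambda>\<omega>. bil R (J \<omega> *v u) (J \<omega> *v w))" for R u w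
    using integrable_bounded_linear[OF bl_bilK iK, of R u w] by (simp add: bil_kron J_def)
  have qb: "q x = bil (vec_of V) x x" for x by (simp add: q_def bil_def mat_vec_of)
  have iq: "integrable M (\<lambda>\<omega>. q (J \<omega> *v u))" for u unfolding qb by (rule iB)
  have lin2: "u \<bullet> (A *v (V *v u)) = (transpose A *v u) \<bullet> (V *v u)" for A :: "real^'k^'k" and u
    by (rule inner_transpose)
  have iL: "integrable M (\<lambda>\<omega>. (J \<omega> *v u) \<bullet> (V *v u))" for u
    using integrable_bounded_linear[OF bl_lin2 iF, of u "V *v u"] by (simp add: lin2 J_def)
  have S1: "\<alpha> * (\<integral>\<omega>. q (J \<omega> *v u) \<partial>M) \<le> q u - lambda0 * (u \<bullet> u)" for u
  proof -
    have "V *v u = lambda0 *\<^sub>R u - \<alpha> *\<^sub>R (((\<integral>\<omega>. F \<omega> \<partial>M) ** V) *v u)"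
      by (subst Veq) (simp add: matrix_vector_mult_diff_rdistrib smv)
    hence "q u = u \<bullet> (lambda0 *\<^sub>R u - \<alpha> *\<^sub>R (((\<integral>\<omega>. F \<omega> \<partial>M) ** V) *v u))"
      unfolding q_def by (rule arg_cong)
    also have "\<dots> = lambda0 * (u \<bullet> u) - \<alpha> * (u \<bullet> ((\<integral>\<omega>. F \<omega> \<partial>M) *v (V *v u)))"
      by (simp only: inner_diff_right inner_scaleR_right matrix_vector_mul_assoc)
    also have "u \<bullet> ((\<integral>\<omega>. F \<omega> \<partial>M) *v (V *v u)) = (\<integral>\<omega>. u \<bullet> (F \<omega> *v (V *v u)) \<partial>M)"
      by (rule integral_bounded_linear[OF bl_lin2 iF, symmetric])
    also have "\<dots> = (\<integral>\<omega>. (J \<omega> *v u) \<bullet> (V *v u) \<partial>M)" by (simp add: lin2 J_def)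
    finally have e: "q u = lambda0 * (u \<bullet> u) - \<alpha> * (\<integral>\<omega>. (J \<omega> *v u) \<bullet> (V *v u) \<partial>M)" .
    have "(\<integral>\<omega>. q (J \<omega> *v u) \<partial>M) \<le> (\<integral>\<omega>. - ((J \<omega> *v u) \<bullet> (V *v u)) \<partial>M)"
      by (rule integral_mono[OF iq integrable_minus[OF iL]]) (unfold q_def J_def, rule pt)
    hence "\<alpha> * (\<integral>\<omega>. q (J \<omega> *v u) \<partial>M) \<le> \<alpha> * (- (\<integral>\<omega>. (J \<omega> *v u) \<bullet> (V *v u) \<partial>M))"
      using alpha by (intro mult_left_mono) auto
    thus ?thesis using e by simp
  qed
  obtain B where B: "B > 0" "\<And>x. q x \<le> B * (norm x)^2" using quad_upper[of V] unfolding q_def by blast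
  define B' where "B' = max B lambda0"
  have B'pos: "B' > 0" and B'l: "B' \<ge> lambda0" using B lam by (auto simp: B'_def)
  have qB': "q x \<le> B' * (norm x)^2" for x
  proof -
    have "B * (norm x)^2 \<le> B' * (norm x)^2" by (intro mult_right_mono) (auto simp: B'_def)
    thus ?thesis using B(2)[of x] by linarith
  qed
  define c where "c = 1 - lambda0 / B'"
  have c0: "0 \<le> c" and c1: "c < 1" using B'pos B'l lam by (auto simp: c_def field_simps)
  have S2: "\<alpha> * (\<integral>\<omega>. q (J \<omega> *v u) \<partial>M) \<le> c * q u" for u
  proof -
    have "lambda0 / B' * q u \<le> lambda0 / B' * (B' * (norm u)^2)"
      using qB'[of u] lam B'pos by (intro mult_left_mono) auto
    also have "\<dots> = lambda0 * (u \<bullet> u)" using B'pos by (simp add: power2_norm_eq_inner)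
    finally have "lambda0 / B' * q u \<le> lambda0 * (u \<bullet> u)" .
    thus ?thesis using S1[of u] by (simp add: c_def algebra_simps)
  qed
  have Tb: "bil (T *v R) u w = \<alpha> * (\<integral>\<omega>. bil R (J \<omega> *v u) (J \<omega> *v w) \<partial>M)" for R u w
  proof -
    have "bil (T *v R) u w = \<alpha> * bil (IK *v R) u w" by (simp add: T_def smv bil_scale)
    also have "bil (IK *v R) u w = (\<integral>\<omega>. bil (kron (F \<omega>) (F \<omega>) *v R) u w \<partial>M)"
      unfolding IK_def by (rule integral_bounded_linear[OF bl_bilK iK, symmetric])
    also have "\<dots> = (\<integral>\<omega>. bil R (J \<omega> *v u) (J \<omega> *v w) \<partial>M)" by (simp add: bil_kron J_def)
    finally show ?thesis .
  qed
  have Qstep: "\<bar>bil (T *v R) x y\<bar> \<le> (c * K) * (q x + q y) / 2"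
    if K0: "K \<ge> 0" and QR: "\<And>x y. \<bar>bil R x y\<bar> \<le> K * (q x + q y) / 2" for R K x y
  proof -
    have "\<bar>\<integral>\<omega>. bil R (J \<omega> *v x) (J \<omega> *v y) \<partial>M\<bar> \<le> (\<integral>\<omega>. K * (q (J \<omega> *v x) + q (J \<omega> *v y)) / 2 \<partial>M)"
    proof -
      have iG: "integrable M (\<lambda>\<omega>. K * (q (J \<omega> *v x) + q (J \<omega> *v y)) / 2)" using iq by simp
      have h1: "(\<integral>\<omega>. bil R (J \<omega> *v x) (J \<omega> *v y) \<partial>M) \<le> (\<integral>\<omega>. K * (q (J \<omega> *v x) + q (J \<omega> *v y)) / 2 \<partial>M)"
        by (rule integral_mono[OF iB iG]) (use QR abs_le_iff in blast)
      have h2: "(\<integral>\<omega>. - bil R (J \<omega> *v x) (J \<omega> *v y) \<partial>M) \<le> (\<integral>\<omega>. K * (q (J \<omega> *v x) + q (J \<omega> *v y)) / 2 \<partial>M)"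
        by (rule integral_mono[OF integrable_minus[OF iB] iG]) (use QR abs_le_iff in blast)
      show ?thesis using h1 h2 by (simp add: abs_le_iff)
    qed
    also have "\<dots> = K / 2 * ((\<integral>\<omega>. q (J \<omega> *v x) \<partial>M) + (\<integral>\<omega>. q (J \<omega> *v y) \<partial>M))"
      using iq by (simp add: integral_add)
    finally have "\<alpha> * \<bar>\<integral>\<omega>. bil R (J \<omega> *v x) (J \<omega> *v y) \<partial>M\<bar>
        \<le> \<alpha> * (K / 2 * ((\<integral>\<omega>. q (J \<omega> *v x) \<partial>M) + (\<integral>\<omega>. q (J \<omega> *v y) \<partial>M)))"
      using alpha by (intro mult_left_mono) auto
    also have "\<dots> = K / 2 * (\<alpha> * (\<integral>\<omega>. q (J \<omega> *v x) \<partial>M) + \<alpha> * (\<integral>\<omega>. q (J \<omega> *v y) \<partial>M))"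
      by (simp add: algebra_simps)
    also have "\<dots> \<le> K / 2 * (c * q x + c * q y)"
      using S2[of x] S2[of y] K0 by (intro mult_left_mono add_mono) auto
    moreover have "\<bar>bil (T *v R) x y\<bar> = \<alpha> * \<bar>\<integral>\<omega>. bil R (J \<omega> *v x) (J \<omega> *v y) \<partial>M\<bar>"
      using alpha by (simp add: Tb abs_mult)
    moreover have "K / 2 * (c * q x + c * q y) = (c * K) * (q x + q y) / 2" by (simp add: algebra_simps)
    ultimately show ?thesis by linarith
  qed
  obtain \<mu> where mu: "\<mu> > 0" "\<And>x. \<mu> * (norm x)^2 \<le> q x" using pd_lower[OF pd] unfolding q_def by blast
  have Qinit: "\<exists>K\<ge>0. \<forall>x y. \<bar>bil R x y\<bar> \<le> K * (q x + q y) / 2" for R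
  proof -
    obtain K where K: "K > 0" "\<And>x y. \<bar>bil R x y\<bar> \<le> K * norm x * norm y" using bil_bound by blast
    have "\<bar>bil R x y\<bar> \<le> (K / \<mu>) * (q x + q y) / 2" for x y
    proof -
      have "0 \<le> (norm x - norm y)^2" by simp
      moreover have "(norm x - norm y)^2 = (norm x)^2 + (norm y)^2 - 2 * (norm x * norm y)"
        by (simp add: power2_diff mult.assoc)
      ultimately have "norm x * norm y \<le> ((norm x)^2 + (norm y)^2) / 2" by (simp add: field_simps)
      hence "K * (norm x * norm y) \<le> K * (((norm x)^2 + (norm y)^2) / 2)" using K(1) by (intro mult_left_mono) auto
      also have "\<dots> \<le> K * (((q x + q y) / \<mu>) / 2)"
      proof -
        have "(norm x)^2 \<le> q x / \<mu>" using mu(2)[of x] mu(1) by (simp add: pos_le_divide_eq mult.commute)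
        moreover have "(norm y)^2 \<le> q y / \<mu>" using mu(2)[of y] mu(1) by (simp add: pos_le_divide_eq mult.commute)
        ultimately have "((norm x)^2 + (norm y)^2) / 2 \<le> ((q x + q y) / \<mu>) / 2" by (simp add: add_divide_distrib)
        thus ?thesis using K(1) by (intro mult_left_mono) auto
      qed
      also have "\<dots> = (K / \<mu>) * (q x + q y) / 2" by simp
      finally show ?thesis using K(2)[of x y] by (simp add: mult.assoc)
    qed
    moreover have "K / \<mu> \<ge> 0" using K mu by simp
    ultimately show ?thesis by blast
  qed
  define TC where "TC = (\<chi> i j. complex_of_real (T $ i $ j))"
  have eig: "cmod z < 1" if v0: "v \<noteq> 0" and ev: "TC *v v = z *s v" for z v
  proof (rule ccontr)
    assume "\<not> cmod z < 1"
    hence z1: "cmod z \<ge> 1" by simp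
    have pw: "TC *v (z^n *s v) = z^(Suc n) *s v" for n
      by (simp add: cmv_scale ev vector_smult_assoc mult.commute)
    define a where "a n = (\<chi> p. Re ((z^n *s v) $ p))" for n
    define b where "b n = (\<chi> p. Im ((z^n *s v) $ p))" for n
    have aS: "T *v a n = a (Suc n)" for n unfolding a_def re_mv TC_def[symmetric] pw ..
    have bS: "T *v b n = b (Suc n)" for n unfolding b_def im_mv TC_def[symmetric] pw ..
    have iter: "\<exists>K\<ge>0. \<forall>n x y. \<bar>bil (f n) x y\<bar> \<le> (c^n * K) * (q x + q y) / 2"
      if fS: "\<And>n. T *v f n = f (Suc n)" for f
    proof -
      obtain K where K: "K \<ge> 0" "\<And>x y. \<bar>bil (f 0) x y\<bar> \<le> K * (q x + q y) / 2" using Qinit by blast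
      have "\<forall>x y. \<bar>bil (f n) x y\<bar> \<le> (c^n * K) * (q x + q y) / 2" for n
      proof (induction n)
        case 0 thus ?case using K by simp
      next
        case (Suc n)
        have "\<bar>bil (T *v f n) x y\<bar> \<le> (c * (c^n * K)) * (q x + q y) / 2" for x y
          by (rule Qstep) (use K c0 Suc in auto)
        thus ?case using fS[of n] by (simp add: mult.assoc)
      qed
      with K(1) show ?thesis by blast
    qed
    obtain Ka where Ka: "Ka \<ge> 0" "\<And>n x y. \<bar>bil (a n) x y\<bar> \<le> (c^n * Ka) * (q x + q y) / 2"
      using iter[of a, OF aS] by blast
    obtain Kb where Kb: "Kb \<ge> 0" "\<And>n x y. \<bar>bil (b n) x y\<bar> \<le> (c^n * Kb) * (q x + q y) / 2"
      using iter[of b, OF bS] by blast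
    have qax: "q (axis i 1) \<le> B'" for i using qB'[of "axis i 1"] by (simp add: norm_axis_1)
    have ent: "cmod (v $ (i,j)) \<le> c^n * ((Ka + Kb) * B')" for i j n
    proof -
      have ca: "\<bar>a n $ (i,j)\<bar> \<le> c^n * Ka * B'"
      proof -
        have "\<bar>a n $ (i,j)\<bar> \<le> (c^n * Ka) * (q (axis i 1) + q (axis j 1)) / 2"
          using Ka(2)[of n "axis i 1" "axis j 1"] by (simp add: bil_axis)
        also have "\<dots> \<le> (c^n * Ka) * (B' + B') / 2"
          using qax[of i] qax[of j] Ka(1) c0 by (intro divide_right_mono mult_left_mono add_mono) auto
        finally show ?thesis by simp
      qed
      have cb: "\<bar>b n $ (i,j)\<bar> \<le> c^n * Kb * B'"
      proof -
        have "\<bar>b n $ (i,j)\<bar> \<le> (c^n * Kb) * (q (axis i 1) + q (axis j 1)) / 2"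
          using Kb(2)[of n "axis i 1" "axis j 1"] by (simp add: bil_axis)
        also have "\<dots> \<le> (c^n * Kb) * (B' + B') / 2"
          using qax[of i] qax[of j] Kb(1) c0 by (intro divide_right_mono mult_left_mono add_mono) auto
        finally show ?thesis by simp
      qed
      have "cmod (v $ (i,j)) \<le> cmod z ^ n * cmod (v $ (i,j))"
        using z1 by (simp add: mult_le_cancel_right1 one_le_power)
      also have "\<dots> = cmod ((z^n *s v) $ (i,j))" by (simp add: norm_mult norm_power)
      also have "\<dots> \<le> \<bar>a n $ (i,j)\<bar> + \<bar>b n $ (i,j)\<bar>" using cmod_le[of "(z^n *s v) $ (i,j)"] by (simp only: a_def b_def vec_lambda_beta)
      also have "\<dots> \<le> c^n * ((Ka + Kb) * B')" using ca cb by (simp add: algebra_simps)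
      finally show ?thesis .
    qed
    have "v $ p = 0" for p
    proof -
      obtain i j where p: "p = (i,j)" by (cases p)
      have lim: "(\<lambda>n. c^n * ((Ka + Kb) * B')) \<longlonglongrightarrow> 0 * ((Ka + Kb) * B')"
        by (intro tendsto_mult LIMSEQ_power_zero tendsto_const) (use c0 c1 in auto)
      have "cmod (v $ p) \<le> 0"
        by (rule LIMSEQ_le_const[OF lim[simplified]]) (use ent p in auto)
      thus ?thesis by simp
    qed
    hence "v = 0" by (simp add: Finite_Cartesian_Product.vec_eq_iff)
    with v0 show False by simp
  qed
  have E: "finite {z. \<exists>v::complex^('k\<times>'k). v \<noteq> 0 \<and> TC *v v = z *s v} \<and> {z. \<exists>v::complex^('k\<times>'k). v \<noteq> 0 \<and> TC *v v = z *s v} \<noteq> {}"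
    by (rule eig_set_fin_ne)
  have seteq: "{cmod z | z. \<exists>v::complex^('k\<times>'k). v \<noteq> 0 \<and> TC *v v = z *s v}
      = cmod ` {z. \<exists>v::complex^('k\<times>'k). v \<noteq> 0 \<and> TC *v v = z *s v}" by auto
  have "Max {cmod z | z. \<exists>v::complex^('k\<times>'k). v \<noteq> 0 \<and> TC *v v = z *s v} < 1"
    unfolding seteq using E eig by (subst Max_less_iff) auto
  thus ?thesis unfolding spec_rad_def T_def[symmetric] IK_def[symmetric] TC_def[symmetric] by simp
qed


theorem proposition2:
  fixes M :: "'a measure" and MY :: "'y measure"
    and G0 G :: "'a \<Rightarrow> real^'k" and Y :: "'a \<Rightarrow> 'y"
    and p0 :: "real^'k \<Rightarrow> 'y measure" and C0 :: "real^'k^'k"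
    and l :: "real^'k \<Rightarrow> 'y \<Rightarrow> real"
    and \<alpha> lambda0 :: real and Cs Bs Vs :: "real^'k^'k"
  assumes P: "prob_space M"
    and alpha: "\<alpha> > 0"
    and lam: "lambda0 > 0"
    \<comment> \<open>G0 ~ N(0,I); Y | G0 ~ p0( . | G0 sqrt C0); G ~ N(0,I) independent of (Y, G0)\<close>
    and G0_gauss: "std_gauss_vec M G0"
    and G_gauss: "std_gauss_vec M G"
    and Y_meas: "Y \<in> measurable M MY"
    and C0_psd: "psd C0"
    and p0_kernel: "p0 \<in> borel \<rightarrow>\<^sub>M prob_algebra MY"
    and Y_cond: "\<forall>A \<in> sets borel. \<forall>B \<in> sets MY.
        measure M {\<omega> \<in> space M. G0 \<omega> \<in> A \<and> Y \<omega> \<in> B}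
        = (\<integral>g. indicator A g * measure (p0 (g v* mat_sqrt C0)) B \<partial>(distr M borel G0))"
    and G_indep: "\<forall>A \<in> sets borel. \<forall>B \<in> sets (MY \<Otimes>\<^sub>M borel).
        measure M {\<omega> \<in> space M. G \<omega> \<in> A \<and> (Y \<omega>, G0 \<omega>) \<in> B}
        = measure M {\<omega> \<in> space M. G \<omega> \<in> A} * measure M {\<omega> \<in> space M. (Y \<omega>, G0 \<omega>) \<in> B}"
    \<comment> \<open>the loss: convex and twice differentiable in theta\<close>
    and l_convex: "\<forall>y. convex_on UNIV (\<lambda>\<theta>. l \<theta> y)"
    and l_twice: "\<forall>y. \<exists>l'. (\<forall>\<theta>. ((\<lambda>t. l t y) has_derivative (\<lambda>h. h \<bullet> l' \<theta>)) (at \<theta>))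
                         \<and> (\<forall>\<theta>. l' differentiable (at \<theta>))"
    \<comment> \<open>fixed point equations\<close>
    and V_pos: "pos_def Vs"
    and integr:
      "integrable M (\<lambda>\<omega>. f_jac l Vs (G0 \<omega> v* Bs + G \<omega> v* mat_sqrt Cs) (Y \<omega>))"
      "integrable M (\<lambda>\<omega>. outer (G0 \<omega>) (f_fun l Vs (G0 \<omega> v* Bs + G \<omega> v* mat_sqrt Cs) (Y \<omega>)))"
      "integrable M (\<lambda>\<omega>. outer (f_fun l Vs (G0 \<omega> v* Bs + G \<omega> v* mat_sqrt Cs) (Y \<omega>))
                               (f_fun l Vs (G0 \<omega> v* Bs + G \<omega> v* mat_sqrt Cs) (Y \<omega>)))"
      "integrable M (\<lambda>\<omega>. kron (f_jac l Vs (G0 \<omega> v* Bs + G \<omega> v* mat_sqrt Cs) (Y \<omega>))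
                              (f_jac l Vs (G0 \<omega> v* Bs + G \<omega> v* mat_sqrt Cs) (Y \<omega>)))"
    and V_eq: "Vs = lambda0 *\<^sub>R mat 1
        - \<alpha> *\<^sub>R ((\<integral>\<omega>. f_jac l Vs (G0 \<omega> v* Bs + G \<omega> v* mat_sqrt Cs) (Y \<omega>) \<partial>M) ** Vs)"
    and B_eq: "Bs = (\<alpha> / lambda0) *\<^sub>R
        ((\<integral>\<omega>. outer (G0 \<omega>) (f_fun l Vs (G0 \<omega> v* Bs + G \<omega> v* mat_sqrt Cs) (Y \<omega>)) \<partial>M) ** Vs)"
    and C_eq: "Cs = \<alpha> *\<^sub>R
        (\<integral>\<omega>. outer (f_fun l Vs (G0 \<omega> v* Bs + G \<omega> v* mat_sqrt Cs) (Y \<omega>))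
                     (f_fun l Vs (G0 \<omega> v* Bs + G \<omega> v* mat_sqrt Cs) (Y \<omega>)) \<partial>M)"
  shows "spec_rad (\<alpha> *\<^sub>R
      (\<integral>\<omega>. kron (f_jac l Vs (G0 \<omega> v* Bs + G \<omega> v* mat_sqrt Cs) (Y \<omega>))
                 (f_jac l Vs (G0 \<omega> v* Bs + G \<omega> v* mat_sqrt Cs) (Y \<omega>)) \<partial>M)) < 1"
  proof (rule main_abstract[OF V_pos alpha lam integr(1) integr(4) V_eq])
  fix \<omega> u
  obtain l' where l1: "\<forall>\<theta>. ((\<lambda>t. l t (Y \<omega>)) has_derivative (\<lambda>h. h \<bullet> l' \<theta>)) (at \<theta>)"
    and l2: "\<forall>\<theta>. l' differentiable (at \<theta>)"
    using l_twice by blast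
  show "(transpose (f_jac l Vs (G0 \<omega> v* Bs + G \<omega> v* mat_sqrt Cs) (Y \<omega>)) *v u) \<bullet>
          (Vs *v (transpose (f_jac l Vs (G0 \<omega> v* Bs + G \<omega> v* mat_sqrt Cs) (Y \<omega>)) *v u))
        \<le> - ((transpose (f_jac l Vs (G0 \<omega> v* Bs + G \<omega> v* mat_sqrt Cs) (Y \<omega>)) *v u) \<bullet> (Vs *v u))"
  proof -
    have c: "convex_on UNIV (\<lambda>\<theta>. l \<theta> (Y \<omega>))" using l_convex by blast
    have d1: "\<And>\<theta>. ((\<lambda>t. l t (Y \<omega>)) has_derivative (\<lambda>h. h \<bullet> l' \<theta>)) (at \<theta>)" using l1 by blast
    have d2: "\<And>\<theta>. l' differentiable (at \<theta>)" using l2 by blast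
    show ?thesis by (rule fjac_key[where l=l and y="Y \<omega>", OF c d1 d2 V_pos])
  qed
qed

end
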